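(* Suppose $w\in\mathbb{Z}^A$ induces the triangulation $Z$. Then there is a constant $a>0$, independent of $\delta$, such that for all sufficiently small $\delta>0$ and every $x\in P_\Sigma$, the set $S_x=\{m\in A:\rho_m(x)>\delta^a\}$ is the vertex set of a simplex (of some dimension $0,1$ or $2$) of $Z$.
   Context: Let $M\cong\mathbb{Z}^2$, $\Delta\subset M_{\mathbb{R}}$ a 2-dimensional lattice polygon, $A=\Delta\cap M$, $P_\Sigma$ the projective toric surface of the normal fan of $\Delta$ with torus $(\mathbb{C}^* )^2$, $s_m(x)=x^m$ for $m\in A$. For $w\in\mathbb{Z}^A$, $\delta\in(0,1)$: $\rho_m=\delta^{2w_m}|s_m|^2/\sum_{m'\in A}\delta^{2w_{m'}}|s_{m'}|^2$ (extended continuously to $P_\Sigma$). We say $w$ induces the triangulation $Z$ if $Z$ is a triangulation of $\Delta$ whose vertex set is all of $A$, each triangle of $Z$ containing no lattice points other than its vertices, such that for every simplex $\sigma$ of $Z$ there is an affine function $\ell_\sigma:M_{\mathbb{R}}\to\mathbb{R}$ with $w_m=\ell_\sigma(m)$ for vertices $m$ of $\sigma$ and $w_m>\ell_\sigma(m)$ for all other $m\in A$ (i.e. $Z$ is the strictly convex regular triangulation given by the lower convex hull of $\{(m,w_m)\}$). Simplices of $Z$ are identified with their vertex sets $S\subset A$; we write $S\in Z$. *)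

theory Defs
  imports "HOL-Analysis.Analysis"
begin

type_synonym lat = "int \<times> int"

definition of_lat :: "lat \<Rightarrow> real \<times> real" where
  "of_lat m = (real_of_int (fst m), real_of_int (snd m))"

definition lattice_polygon :: "(real \<times> real) set \<Rightarrow> bool" where
  "lattice_polygon \<Delta> \<longleftrightarrow> (\<exists>V. finite V \<and> \<Delta> = convex hull (of_lat ` V)) \<and> aff_dim \<Delta> = 2"

definition lattice_points :: "(real \<times> real) set \<Rightarrow> lat set" where
  "lattice_points \<Delta> = {m. of_lat m \<in> \<Delta>}"

definition aff_fun :: "real \<Rightarrow> real \<Rightarrow> real \<Rightarrow> lat \<Rightarrow> real" where
  "aff_fun c0 c1 c2 m = c0 + c1 * real_of_int (fst m) + c2 * real_of_int (snd m)"

definition is_triangulation :: "(real \<times> real) set \<Rightarrow> lat set \<Rightarrow> lat set set \<Rightarrow> bool" where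
  "is_triangulation \<Delta> A Z \<longleftrightarrow>
     finite Z \<and>
     (\<forall>S\<in>Z. S \<noteq> {} \<and> S \<subseteq> A \<and> card S \<le> 3 \<and> \<not> affine_dependent (of_lat ` S)) \<and>
     (\<forall>S\<in>Z. \<forall>T. T \<subseteq> S \<and> T \<noteq> {} \<longrightarrow> T \<in> Z) \<and>
     (\<forall>S\<in>Z. \<exists>T\<in>Z. card T = 3 \<and> S \<subseteq> T) \<and>
     (\<Union>S\<in>Z. convex hull (of_lat ` S)) = \<Delta> \<and>
     (\<forall>S\<in>Z. \<forall>T\<in>Z. convex hull (of_lat ` S) \<inter> convex hull (of_lat ` T)
                      = convex hull (of_lat ` (S \<inter> T))) \<and>
     (\<forall>m\<in>A. {m} \<in> Z) \<and>
     (\<forall>S\<in>Z. card S = 3 \<longrightarrow> {m. of_lat m \<in> convex hull (of_lat ` S)} = S)"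

definition induces :: "(real \<times> real) set \<Rightarrow> (lat \<Rightarrow> int) \<Rightarrow> lat set set \<Rightarrow> bool" where
  "induces \<Delta> w Z \<longleftrightarrow> is_triangulation \<Delta> (lattice_points \<Delta>) Z \<and>
     (\<forall>S\<in>Z. \<exists>c0 c1 c2. (\<forall>m\<in>S. real_of_int (w m) = aff_fun c0 c1 c2 m) \<and>
                        (\<forall>m\<in>lattice_points \<Delta> - S. real_of_int (w m) > aff_fun c0 c1 c2 m))"

definition mon :: "complex \<times> complex \<Rightarrow> lat \<Rightarrow> complex" where
  "mon x m = power_int (fst x) (fst m) * power_int (snd x) (snd m)"

definition torus :: "(complex \<times> complex) set" where
  "torus = {x. fst x \<noteq> 0 \<and> snd x \<noteq> 0}"

definition mon_norm :: "lat set \<Rightarrow> complex \<times> complex \<Rightarrow> real" where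
  "mon_norm A x = sqrt (\<Sum>m\<in>A. (cmod (mon x m))\<^sup>2)"

text \<open>P_Sigma, realised through its projective embedding by the sections s_m, m \<in> A
  (very ample for a 2-dimensional lattice polygon): a point is represented by a unit vector
  (up to phase) in C^A which is a limit of normalised monomial vectors of torus points.\<close>
definition PSigma :: "lat set \<Rightarrow> (lat \<Rightarrow> complex) set" where
  "PSigma A = {z. (\<forall>m. m \<notin> A \<longrightarrow> z m = 0) \<and>
     (\<exists>X. (\<forall>k. X k \<in> torus) \<and>
          (\<forall>m\<in>A. (\<lambda>k. mon (X k) m / complex_of_real (mon_norm A (X k))) \<longlonglongrightarrow> z m))}"

text \<open>rho_m, evaluated on the homogeneous coordinates z (this is the continuous extension).\<close>
definition rho :: "lat set \<Rightarrow> (lat \<Rightarrow> int) \<Rightarrow> real \<Rightarrow> (lat \<Rightarrow> complex) \<Rightarrow> lat \<Rightarrow> real" where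
  "rho A w \<delta> z m = \<delta> powr (2 * real_of_int (w m)) * (cmod (z m))\<^sup>2 /
     (\<Sum>m'\<in>A. \<delta> powr (2 * real_of_int (w m')) * (cmod (z m'))\<^sup>2)"

end

theory Submission
  imports Defs
begin


lemma of_lat_inj: "inj of_lat"
  by (auto simp: inj_on_def of_lat_def prod_eq_iff)

lemma finite_lp:
  assumes "lattice_polygon \<Delta>" shows "finite (lattice_points \<Delta>)"
proof -
  obtain V where V: "finite V" "\<Delta> = convex hull (of_lat ` V)"
    using assms unfolding lattice_polygon_def by blast
  have "compact \<Delta>" using V by (simp add: compact_convex_hull finite_imp_compact)
  then obtain B where B: "\<forall>x\<in>\<Delta>. norm x \<le> B" using compact_imp_bounded bounded_iff by blast
  define C where "C = \<lceil>B\<rceil>"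
  have "lattice_points \<Delta> \<subseteq> {-C..C} \<times> {-C..C}"
  proof
    fix m assume "m \<in> lattice_points \<Delta>"
    hence "norm (of_lat m) \<le> B" using B by (auto simp: lattice_points_def)
    moreover have "\<bar>real_of_int (fst m)\<bar> \<le> norm (of_lat m)" "\<bar>real_of_int (snd m)\<bar> \<le> norm (of_lat m)"
      unfolding of_lat_def using norm_fst_le norm_snd_le by (metis real_norm_def)+
    ultimately have "\<bar>real_of_int (fst m)\<bar> \<le> B" "\<bar>real_of_int (snd m)\<bar> \<le> B" by linarith+
    hence "\<bar>fst m\<bar> \<le> C" "\<bar>snd m\<bar> \<le> C" unfolding C_def by linarith+
    thus "m \<in> {-C..C} \<times> {-C..C}" by (cases m) auto
  qed
  thus ?thesis by (rule finite_subset) auto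
qed

lemma nonempty_lp:
  assumes "lattice_polygon \<Delta>" shows "lattice_points \<Delta> \<noteq> {}"
proof -
  obtain V where V: "finite V" "\<Delta> = convex hull (of_lat ` V)" and d: "aff_dim \<Delta> = 2"
    using assms unfolding lattice_polygon_def by blast
  have "\<Delta> \<noteq> {}"
  proof
    assume "\<Delta> = {}"
    hence "aff_dim \<Delta> = -1" by (simp add: aff_dim_empty)
    with d show False by simp
  qed
  hence "V \<noteq> {}" using V(2) by (metis convex_hull_empty image_empty)
  then obtain v where "v \<in> V" by blast
  hence "of_lat v \<in> \<Delta>" unfolding V(2) by (intro hull_inc imageI)
  thus ?thesis unfolding lattice_points_def by (metis empty_iff mem_Collect_eq)
qed

lemma convex_lp:
  assumes "lattice_polygon \<Delta>" shows "convex \<Delta>"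
proof -
  obtain V where V: "\<Delta> = convex hull (of_lat ` V)"
    using assms unfolding lattice_polygon_def by blast
  show ?thesis unfolding V by (rule convex_convex_hull)
qed

lemma eta_exists:
  assumes "finite Z" "finite A"
    and "\<forall>S\<in>Z. \<exists>c0 c1 c2. (\<forall>m\<in>S. real_of_int (w m) = aff_fun c0 c1 c2 m) \<and>
                        (\<forall>m\<in>A - S. real_of_int (w m) > aff_fun c0 c1 c2 m)"
  shows "\<exists>\<eta>>0. \<forall>S\<in>Z. \<exists>c0 c1 c2. (\<forall>m\<in>S. real_of_int (w m) = aff_fun c0 c1 c2 m) \<and>
                        (\<forall>m\<in>A - S. real_of_int (w m) \<ge> aff_fun c0 c1 c2 m + \<eta>)"
  using assms(1,3)
proof (induction Z rule: finite_induct)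
  case empty
  show ?case by (rule exI[of _ 1]) simp
next
  case (insert S Z)
  have "\<forall>S\<in>Z. \<exists>c0 c1 c2. (\<forall>m\<in>S. real_of_int (w m) = aff_fun c0 c1 c2 m) \<and>
                        (\<forall>m\<in>A - S. real_of_int (w m) > aff_fun c0 c1 c2 m)"
    using insert.prems by blast
  then obtain \<eta> where e: "\<eta> > 0" "\<forall>S\<in>Z. \<exists>c0 c1 c2. (\<forall>m\<in>S. real_of_int (w m) = aff_fun c0 c1 c2 m) \<and>
                        (\<forall>m\<in>A - S. real_of_int (w m) \<ge> aff_fun c0 c1 c2 m + \<eta>)"
    using insert.IH by blast
  obtain c0 c1 c2 where c: "\<forall>m\<in>S. real_of_int (w m) = aff_fun c0 c1 c2 m"
     "\<forall>m\<in>A - S. real_of_int (w m) > aff_fun c0 c1 c2 m" using insert.prems by blast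
  define g where "g m = real_of_int (w m) - aff_fun c0 c1 c2 m" for m
  define \<eta>' where "\<eta>' = (if A - S = {} then 1 else Min (g ` (A - S)))"
  have fAS: "finite (g ` (A - S))" using assms(2) by simp
  have "\<eta>' > 0"
  proof (cases "A - S = {}")
    case True thus ?thesis unfolding \<eta>'_def by simp
  next
    case False
    have "\<forall>x\<in>g ` (A - S). 0 < x" using c(2) unfolding g_def by simp
    thus ?thesis unfolding \<eta>'_def using False Min_gr_iff[OF fAS] by simp
  qed
  have ge: "\<forall>m\<in>A - S. real_of_int (w m) \<ge> aff_fun c0 c1 c2 m + min \<eta> \<eta>'"
  proof
    fix m assume m: "m \<in> A - S"
    hence "A - S \<noteq> {}" by blast
    hence "\<eta>' = Min (g ` (A - S))" unfolding \<eta>'_def by simp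
    also have "\<dots> \<le> g m" using m fAS by (simp add: Min_le)
    finally have "\<eta>' \<le> g m" .
    hence "min \<eta> \<eta>' \<le> g m" by linarith
    thus "real_of_int (w m) \<ge> aff_fun c0 c1 c2 m + min \<eta> \<eta>'" unfolding g_def by simp
  qed
  show ?case
  proof (rule exI[of _ "min \<eta> \<eta>'"], intro conjI ballI)
    show "min \<eta> \<eta>' > 0" using e(1) \<open>\<eta>' > 0\<close> by simp
  next
    fix T assume "T \<in> insert S Z"
    then show "\<exists>c0 c1 c2. (\<forall>m\<in>T. real_of_int (w m) = aff_fun c0 c1 c2 m) \<and>
                        (\<forall>m\<in>A - T. real_of_int (w m) \<ge> aff_fun c0 c1 c2 m + min \<eta> \<eta>')"
    proof
      assume "T = S" thus ?thesis using c(1) ge by blast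
    next
      assume "T \<in> Z"
      then obtain d0 d1 d2 where d: "\<forall>m\<in>T. real_of_int (w m) = aff_fun d0 d1 d2 m"
           "\<forall>m\<in>A - T. real_of_int (w m) \<ge> aff_fun d0 d1 d2 m + \<eta>" using e(2) by blast
      have "\<forall>m\<in>A - T. real_of_int (w m) \<ge> aff_fun d0 d1 d2 m + min \<eta> \<eta>'"
      proof
        fix m assume "m \<in> A - T"
        hence "real_of_int (w m) \<ge> aff_fun d0 d1 d2 m + \<eta>" using d(2) by blast
        moreover have "min \<eta> \<eta>' \<le> \<eta>" by simp
        ultimately show "real_of_int (w m) \<ge> aff_fun d0 d1 d2 m + min \<eta> \<eta>'" by linarith
      qed
      thus ?thesis using d(1) by blast
    qed
  qed
qed

lemma aff_comb:
  fixes p :: "'i \<Rightarrow> real \<times> real"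
  assumes "finite I" "sum \<alpha> I = 1"
  shows "a0 + a1 * fst (\<Sum>i\<in>I. \<alpha> i *\<^sub>R p i) + a2 * snd (\<Sum>i\<in>I. \<alpha> i *\<^sub>R p i)
       = (\<Sum>i\<in>I. \<alpha> i * (a0 + a1 * fst (p i) + a2 * snd (p i)))"
proof -
  have "(\<Sum>i\<in>I. \<alpha> i * (a0 + a1 * fst (p i) + a2 * snd (p i)))
     = a0 * sum \<alpha> I + a1 * (\<Sum>i\<in>I. \<alpha> i * fst (p i)) + a2 * (\<Sum>i\<in>I. \<alpha> i * snd (p i))"
    by (simp add: algebra_simps sum.distrib sum_distrib_left)
  thus ?thesis using assms by (simp add: fst_sum snd_sum)
qed



lemma comb:
  fixes A :: "lat set" and t y1 y2 \<eta> :: real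
  assumes tri: "is_triangulation \<Delta> A Z" and cv: "convex \<Delta>" and sub: "of_lat ` A \<subseteq> \<Delta>"
    and fin: "finite A" and eta: "\<eta> > 0"
    and etaZ: "\<forall>S\<in>Z. \<exists>c0 c1 c2. (\<forall>m\<in>S. real_of_int (w m) = aff_fun c0 c1 c2 m) \<and>
                        (\<forall>m\<in>A - S. real_of_int (w m) \<ge> aff_fun c0 c1 c2 m + \<eta>)"
    and t: "t > 0" and SA: "S \<subseteq> A" and Sne: "S \<noteq> {}"
    and near: "\<forall>m\<in>S. \<forall>m'\<in>A. t * w m - y1 * fst m - y2 * snd m
                 < t * w m' - y1 * fst m' - y2 * snd m' + t * (\<eta> / (card A + 1))"
  shows "\<exists>\<sigma>\<in>Z. S \<subseteq> \<sigma>"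
proof (rule ccontr)
  assume nosub: "\<not> (\<exists>\<sigma>\<in>Z. S \<subseteq> \<sigma>)"
  define h where "h m = t * w m - y1 * fst m - y2 * snd m" for m :: lat
  define \<epsilon> where "\<epsilon> = \<eta> / (card A + 1)"
  have finS: "finite S" using SA fin finite_subset by blast
  define k where "k = card S"
  have kpos: "k > 0" using finS Sne k_def by (simp add: card_gt_0_iff)
  have kA: "k \<le> card A" using SA fin k_def card_mono by blast
  define b where "b = (\<Sum>m\<in>S. (1 / real k) *\<^sub>R of_lat m)"
  have "b \<in> \<Delta>" unfolding b_def
    by (rule convex_sum[OF finS cv]) (use kpos SA sub k_def in auto)
  moreover have cover: "(\<Union>S\<in>Z. convex hull (of_lat ` S)) = \<Delta>" and ZA: "\<forall>S\<in>Z. S \<subseteq> A"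
    using tri unfolding is_triangulation_def by auto
  ultimately obtain \<sigma> where \<sigma>: "\<sigma> \<in> Z" "b \<in> convex hull (of_lat ` \<sigma>)" by blast
  have \<sigma>A: "\<sigma> \<subseteq> A" using ZA \<sigma> by auto
  have fin\<sigma>: "finite \<sigma>" using \<sigma>A fin finite_subset by blast
  obtain u where u: "\<forall>x\<in>of_lat ` \<sigma>. 0 \<le> u x" "sum u (of_lat ` \<sigma>) = 1"
      "(\<Sum>x\<in>of_lat ` \<sigma>. u x *\<^sub>R x) = b"
    using \<sigma>(2) convex_hull_finite[of "of_lat ` \<sigma>"] fin\<sigma> by auto
  have inj: "inj_on of_lat \<sigma>" using of_lat_inj inj_on_subset by blast
  define \<mu> where "\<mu> n = u (of_lat n)" for n
  have mu1: "sum \<mu> \<sigma> = 1" using u(2) sum.reindex[OF inj, of u] unfolding \<mu>_def by simp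
  have mub: "(\<Sum>n\<in>\<sigma>. \<mu> n *\<^sub>R of_lat n) = b" using u(3) sum.reindex[OF inj, of "\<lambda>x. u x *\<^sub>R x"]
    unfolding \<mu>_def by simp
  have mu0: "\<forall>n\<in>\<sigma>. 0 \<le> \<mu> n" using u(1) unfolding \<mu>_def by auto
  obtain c0 c1 c2 where c: "\<forall>m\<in>\<sigma>. real_of_int (w m) = aff_fun c0 c1 c2 m"
      "\<forall>m\<in>A - \<sigma>. real_of_int (w m) \<ge> aff_fun c0 c1 c2 m + \<eta>"
    using etaZ \<sigma>(1) by blast
  define H where "H p = t * c0 + (t * c1 - y1) * fst p + (t * c2 - y2) * snd p" for p :: "real \<times> real"
  have Hl: "H (of_lat m) = t * aff_fun c0 c1 c2 m - y1 * fst m - y2 * snd m" for m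
    unfolding H_def aff_fun_def of_lat_def by (simp add: algebra_simps)
  have h\<sigma>: "h m = H (of_lat m)" if "m \<in> \<sigma>" for m
    using c(1) that unfolding Hl h_def by simp
  have hA: "h m \<ge> H (of_lat m) + t * \<eta>" if "m \<in> A - \<sigma>" for m
  proof -
    have "t * w m \<ge> t * (aff_fun c0 c1 c2 m + \<eta>)" using c(2) that t by (simp add: mult_left_mono)
    thus ?thesis unfolding Hl h_def by (simp add: algebra_simps)
  qed
  have hge: "h m \<ge> H (of_lat m)" if "m \<in> A" for m
  proof (cases "m \<in> \<sigma>")
    case True thus ?thesis using h\<sigma> by simp
  next
    case False
    hence "h m \<ge> H (of_lat m) + t * \<eta>" using hA that by blast
    moreover have "t * \<eta> > 0" using t eta by simp
    ultimately show ?thesis by linarith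
  qed
  obtain m1 where m1: "m1 \<in> S" "m1 \<notin> \<sigma>" using nosub \<sigma>(1) by blast
  have m1A: "m1 \<in> A - \<sigma>" using m1 SA by blast
  have i: "(\<Sum>m\<in>S. h m) \<ge> (\<Sum>m\<in>S. H (of_lat m)) + t * \<eta>"
  proof -
    have "t * \<eta> \<le> h m1 - H (of_lat m1)" using hA[OF m1A] by simp
    also have "\<dots> \<le> (\<Sum>m\<in>S. h m - H (of_lat m))"
    proof (rule member_le_sum[OF m1(1) _ finS])
      fix x assume "x \<in> S - {m1}"
      hence "x \<in> A" using SA by blast
      from hge[OF this] show "0 \<le> h x - H (of_lat x)" by simp
    qed
    finally show ?thesis by (simp add: sum_subtractf)
  qed
  have Haff: "H (\<Sum>i\<in>I. \<alpha> i *\<^sub>R p i) = (\<Sum>i\<in>I. \<alpha> i * H (p i))" if "finite I" "sum \<alpha> I = 1"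
    for I :: "lat set" and \<alpha> p
    unfolding H_def using aff_comb[OF that] by simp
  have ii: "(\<Sum>m\<in>S. H (of_lat m)) = k * H b"
  proof -
    have s1: "sum (\<lambda>_. 1 / real k) S = 1" using kpos k_def by simp
    have "H b = (\<Sum>m\<in>S. (1 / real k) * H (of_lat m))" unfolding b_def by (rule Haff[OF finS s1])
    also have "\<dots> = (1 / real k) * (\<Sum>m\<in>S. H (of_lat m))" by (rule sum_distrib_left[symmetric])
    finally show ?thesis using kpos by simp
  qed
  have iii: "H b = (\<Sum>n\<in>\<sigma>. \<mu> n * h n)"
  proof -
    have "H b = (\<Sum>n\<in>\<sigma>. \<mu> n * H (of_lat n))" unfolding mub[symmetric] by (rule Haff[OF fin\<sigma> mu1])
    also have "\<dots> = (\<Sum>n\<in>\<sigma>. \<mu> n * h n)" by (rule sum.cong) (simp_all add: h\<sigma>)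
    finally show ?thesis .
  qed
  have iv: "(\<Sum>m\<in>S. h m) \<le> k * (h n + t * \<epsilon>)" if "n \<in> A" for n
  proof -
    have "(\<Sum>m\<in>S. h m) \<le> (\<Sum>m\<in>S. h n + t * \<epsilon>)"
    proof (rule sum_mono)
      fix m assume "m \<in> S"
      hence "h m < h n + t * \<epsilon>" using near that unfolding h_def \<epsilon>_def by blast
      thus "h m \<le> h n + t * \<epsilon>" by simp
    qed
    thus ?thesis using k_def by simp
  qed
  have "(\<Sum>m\<in>S. h m) = sum \<mu> \<sigma> * (\<Sum>m\<in>S. h m)" using mu1 by simp
  also have "\<dots> = (\<Sum>n\<in>\<sigma>. \<mu> n * (\<Sum>m\<in>S. h m))" by (rule sum_distrib_right)
  also have "\<dots> \<le> (\<Sum>n\<in>\<sigma>. \<mu> n * (k * (h n + t * \<epsilon>)))"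
  proof (rule sum_mono)
    fix n assume n: "n \<in> \<sigma>"
    hence "n \<in> A" using \<sigma>A by blast
    from iv[OF this] mu0 n show "\<mu> n * (\<Sum>m\<in>S. h m) \<le> \<mu> n * (k * (h n + t * \<epsilon>))"
      by (simp add: mult_left_mono)
  qed
  also have "\<dots> = k * (\<Sum>n\<in>\<sigma>. \<mu> n * h n) + k * t * \<epsilon> * sum \<mu> \<sigma>"
  proof -
    have "(\<Sum>n\<in>\<sigma>. \<mu> n * (k * (h n + t * \<epsilon>))) = (\<Sum>n\<in>\<sigma>. k * (\<mu> n * h n) + (k * t * \<epsilon>) * \<mu> n)"
      by (rule sum.cong) (simp_all add: algebra_simps)
    also have "\<dots> = (\<Sum>n\<in>\<sigma>. k * (\<mu> n * h n)) + (\<Sum>n\<in>\<sigma>. (k * t * \<epsilon>) * \<mu> n)"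
      by (rule sum.distrib)
    also have "\<dots> = k * (\<Sum>n\<in>\<sigma>. \<mu> n * h n) + (k * t * \<epsilon>) * sum \<mu> \<sigma>"
      by (simp only: sum_distrib_left)
    finally show ?thesis .
  qed
  also have "\<dots> = (\<Sum>m\<in>S. H (of_lat m)) + k * t * \<epsilon>" using ii iii mu1 by simp
  finally have "t * \<eta> \<le> k * t * \<epsilon>" using i by linarith
  hence "t * \<eta> \<le> t * (k * \<epsilon>)" by (simp add: algebra_simps)
  hence "\<eta> \<le> k * \<epsilon>" using t by simp
  moreover have "k * \<epsilon> < \<eta>"
  proof -
    have "k * \<epsilon> = \<eta> * (k / (card A + 1))" unfolding \<epsilon>_def by simp
    also have "\<dots> < \<eta> * 1" using eta kA by (intro mult_strict_left_mono) auto
    finally show ?thesis by simp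
  qed
  ultimately show False by simp
qed



lemma cmod_mon:
  assumes "x \<in> torus"
  shows "cmod (mon x m) = exp (real_of_int (fst m) * ln (cmod (fst x)) + real_of_int (snd m) * ln (cmod (snd x)))"
proof -
  have r1: "cmod (fst x) > 0" and r2: "cmod (snd x) > 0" using assms by (auto simp: torus_def)
  have e1: "cmod (fst x) powi (fst m) = exp (real_of_int (fst m) * ln (cmod (fst x)))"
    using exp_power_int[of "ln (cmod (fst x))" "fst m"] r1 by simp
  have e2: "cmod (snd x) powi (snd m) = exp (real_of_int (snd m) * ln (cmod (snd x)))"
    using exp_power_int[of "ln (cmod (snd x))" "snd m"] r2 by simp
  show ?thesis unfolding mon_def norm_mult norm_power_int e1 e2 by (simp add: exp_add)
qed

lemma mon_nz: "x \<in> torus \<Longrightarrow> mon x m \<noteq> 0"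
  by (auto simp: mon_def torus_def)

lemma norm_pos:
  assumes "x \<in> torus" "finite A" "A \<noteq> {}"
  shows "mon_norm A x > 0" "(mon_norm A x)\<^sup>2 = (\<Sum>m\<in>A. (cmod (mon x m))\<^sup>2)"
proof -
  obtain m0 where m0: "m0 \<in> A" using assms by blast
  have "(\<Sum>m\<in>A. (cmod (mon x m))\<^sup>2) > 0"
    by (rule sum_pos2[OF assms(2) m0]) (use mon_nz[OF assms(1)] in auto)
  thus "mon_norm A x > 0" "(mon_norm A x)\<^sup>2 = (\<Sum>m\<in>A. (cmod (mon x m))\<^sup>2)"
    unfolding mon_norm_def by simp_all
qed

lemma unit_sum:
  assumes "x \<in> torus" "finite A" "A \<noteq> {}"
  shows "(\<Sum>m\<in>A. (cmod (mon x m / complex_of_real (mon_norm A x)))\<^sup>2) = 1"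
proof -
  note N = norm_pos[OF assms]
  have "(\<Sum>m\<in>A. (cmod (mon x m / complex_of_real (mon_norm A x)))\<^sup>2)
      = (\<Sum>m\<in>A. (cmod (mon x m))\<^sup>2 / (mon_norm A x)\<^sup>2)"
    using N(1) by (simp add: norm_divide power_divide)
  also have "\<dots> = (\<Sum>m\<in>A. (cmod (mon x m))\<^sup>2) / (mon_norm A x)\<^sup>2"
    by (simp add: sum_divide_distrib)
  also have "\<dots> = 1" using N by (metis div_self less_numeral_extra(3) zero_less_power)
  finally show ?thesis .
qed

lemma torus_near:
  fixes \<delta> \<epsilon> :: real
  assumes x: "x \<in> torus" and fin: "finite A" and ne: "A \<noteq> {}" and d: "0 < \<delta>" "\<delta> < 1"
    and m: "m \<in> A" and m': "m' \<in> A"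
    and r: "rho A w \<delta> (\<lambda>m. mon x m / complex_of_real (mon_norm A x)) m > \<delta> powr (2 * \<epsilon>)"
  shows "(- ln \<delta>) * real_of_int (w m) - ln (cmod (fst x)) * real_of_int (fst m) - ln (cmod (snd x)) * real_of_int (snd m)
       < (- ln \<delta>) * real_of_int (w m') - ln (cmod (fst x)) * real_of_int (fst m') - ln (cmod (snd x)) * real_of_int (snd m') + (- ln \<delta>) * \<epsilon>"
proof -
  define t where "t = - ln \<delta>"
  define y1 where "y1 = ln (cmod (fst x))"
  define y2 where "y2 = ln (cmod (snd x))"
  define h where "h n = t * real_of_int (w n) - y1 * real_of_int (fst n) - y2 * real_of_int (snd n)" for n :: lat
  define N where "N = mon_norm A x"
  have N: "N > 0" using norm_pos[OF x fin ne] N_def by simp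
  define E where "E n = \<delta> powr (2 * real_of_int (w n)) * (cmod (mon x n / complex_of_real N))\<^sup>2" for n
  have E: "E n = exp (- 2 * h n) / N\<^sup>2" for n
  proof -
    have "\<delta> powr (2 * real_of_int (w n)) = exp (- 2 * t * real_of_int (w n))"
      using d unfolding t_def powr_def by simp
    moreover have "(cmod (mon x n / complex_of_real N))\<^sup>2
       = exp (2 * (y1 * real_of_int (fst n) + y2 * real_of_int (snd n))) / N\<^sup>2"
    proof -
      have "cmod (mon x n / complex_of_real N) = exp (y1 * real_of_int (fst n) + y2 * real_of_int (snd n)) / N"
        using N cmod_mon[OF x, of n] unfolding y1_def y2_def by (simp add: norm_divide mult.commute)
      thus ?thesis by (simp add: power_divide power2_eq_square exp_add[symmetric])
    qed
    ultimately have "E n = exp (- 2 * t * real_of_int (w n)) * exp (2 * (y1 * real_of_int (fst n) + y2 * real_of_int (snd n))) / N\<^sup>2"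
      unfolding E_def by simp
    also have "\<dots> = exp (- 2 * h n) / N\<^sup>2" unfolding h_def exp_add[symmetric] by (simp add: algebra_simps)
    finally show ?thesis .
  qed
  have Epos: "E n > 0" for n using E N by simp
  have rr: "rho A w \<delta> (\<lambda>m. mon x m / complex_of_real (mon_norm A x)) m = E m / sum E A"
    unfolding rho_def E_def N_def by simp
  have sE: "sum E A > 0" using sum_pos[OF fin ne] Epos by blast
  have sE': "sum E A \<ge> E m'"
    by (rule member_le_sum[OF m' _ fin]) (simp add: less_imp_le[OF Epos])
  have pw: "\<delta> powr (2 * \<epsilon>) = exp (- 2 * t * \<epsilon>)" using d unfolding t_def powr_def by simp
  have "exp (- 2 * t * \<epsilon>) * sum E A < E m" using r rr pw sE by (simp add: pos_less_divide_eq)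
  moreover have "exp (- 2 * t * \<epsilon>) * E m' \<le> exp (- 2 * t * \<epsilon>) * sum E A"
    using sE' by simp
  ultimately have "exp (- 2 * t * \<epsilon>) * E m' < E m" by linarith
  hence "exp (- 2 * t * \<epsilon>) * exp (- 2 * h m') < exp (- 2 * h m)"
    unfolding E using N by (simp add: divide_strict_right_mono_neg field_simps)
  hence "exp (- 2 * t * \<epsilon> + - 2 * h m') < exp (- 2 * h m)" by (simp only: exp_add)
  hence "- 2 * t * \<epsilon> + - 2 * h m' < - 2 * h m" by simp
  hence "h m < h m' + t * \<epsilon>" by simp
  thus ?thesis unfolding h_def t_def y1_def y2_def by simp
qed



theorem lemma3p4:
  fixes \<Delta> :: "(real \<times> real) set" and w :: "lat \<Rightarrow> int" and Z :: "lat set set"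
  assumes "lattice_polygon \<Delta>"
    and "induces \<Delta> w Z"
  shows "\<exists>a > 0. \<exists>\<delta>0 > 0. \<forall>\<delta>. 0 < \<delta> \<and> \<delta> < \<delta>0 \<and> \<delta> < 1 \<longrightarrow>
           (\<forall>z \<in> PSigma (lattice_points \<Delta>).
              {m \<in> lattice_points \<Delta>. rho (lattice_points \<Delta>) w \<delta> z m > \<delta> powr a} \<in> Z)"
proof -
  define A where "A = lattice_points \<Delta>"
  have fin: "finite A" using finite_lp[OF assms(1)] A_def by simp
  have ne: "A \<noteq> {}" using nonempty_lp[OF assms(1)] A_def by simp
  have cv: "convex \<Delta>" using convex_lp[OF assms(1)] .
  have sub: "of_lat ` A \<subseteq> \<Delta>" unfolding A_def lattice_points_def by auto
  have tri: "is_triangulation \<Delta> A Z"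
    using assms(2) unfolding A_def induces_def by (rule conjunct1)
  have strict: "\<forall>S\<in>Z. \<exists>c0 c1 c2. (\<forall>m\<in>S. real_of_int (w m) = aff_fun c0 c1 c2 m) \<and>
                        (\<forall>m\<in>A - S. real_of_int (w m) > aff_fun c0 c1 c2 m)"
    using assms(2) unfolding A_def induces_def by (rule conjunct2)
  have finZ: "finite Z" using tri unfolding is_triangulation_def by (elim conjE) assumption
  have closed: "\<forall>S\<in>Z. \<forall>T. T \<subseteq> S \<and> T \<noteq> {} \<longrightarrow> T \<in> Z" using tri unfolding is_triangulation_def by (elim conjE) assumption
  obtain \<eta> where eta: "\<eta> > 0" and etaZ: "\<forall>S\<in>Z. \<exists>c0 c1 c2. (\<forall>m\<in>S. real_of_int (w m) = aff_fun c0 c1 c2 m) \<and>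
                        (\<forall>m\<in>A - S. real_of_int (w m) \<ge> aff_fun c0 c1 c2 m + \<eta>)"
    using eta_exists[OF finZ fin strict] by blast
  define \<epsilon> where "\<epsilon> = \<eta> / (card A + 1)"
  have epos: "\<epsilon> > 0" unfolding \<epsilon>_def using eta by simp
  define a where "a = 2 * \<epsilon>"
  have apos: "a > 0" using epos a_def by simp
  have cA: "card A > 0" using fin ne by (simp add: card_gt_0_iff)
  define \<delta>0 where "\<delta>0 = (1 / real (card A)) powr (1 / a)"
  have d0pos: "\<delta>0 > 0" unfolding \<delta>0_def using cA by simp
  have d0a: "\<delta>0 powr a = 1 / real (card A)"
    unfolding \<delta>0_def using apos cA by (simp add: powr_powr)
  have main: "\<forall>\<delta>. 0 < \<delta> \<and> \<delta> < \<delta>0 \<and> \<delta> < 1 \<longrightarrow>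
           (\<forall>z \<in> PSigma A. {m \<in> A. rho A w \<delta> z m > \<delta> powr a} \<in> Z)"
  proof (intro allI impI ballI)
    fix \<delta> :: real and z assume dd: "0 < \<delta> \<and> \<delta> < \<delta>0 \<and> \<delta> < 1" and z: "z \<in> PSigma A"
    hence d: "0 < \<delta>" "\<delta> < \<delta>0" "\<delta> < 1" by auto
    obtain X where X: "\<forall>k. X k \<in> torus"
      "\<forall>m\<in>A. (\<lambda>k. mon (X k) m / complex_of_real (mon_norm A (X k))) \<longlonglongrightarrow> z m"
      using z unfolding PSigma_def mem_Collect_eq by (elim conjE exE) blast
    define U where "U k m = mon (X k) m / complex_of_real (mon_norm A (X k))" for k m
    have Ut: "\<forall>m\<in>A. (\<lambda>k. U k m) \<longlonglongrightarrow> z m" using X(2) unfolding U_def by simp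
    have "(\<lambda>k. \<Sum>m\<in>A. (cmod (U k m))\<^sup>2) \<longlonglongrightarrow> (\<Sum>m\<in>A. (cmod (z m))\<^sup>2)"
      by (intro tendsto_sum tendsto_power tendsto_norm) (use Ut in blast)
    moreover have "(\<lambda>k. \<Sum>m\<in>A. (cmod (U k m))\<^sup>2) = (\<lambda>k. 1)"
      using unit_sum[OF _ fin ne] X(1) unfolding U_def by simp
    ultimately have z1: "(\<Sum>m\<in>A. (cmod (z m))\<^sup>2) = 1"
      using LIMSEQ_unique tendsto_const by metis
    then obtain m0 where m0: "m0 \<in> A" "z m0 \<noteq> 0"
      by (metis (mono_tags, lifting) norm_zero power_zero_numeral sum.neutral zero_neq_one)
    define D where "D v = (\<Sum>m'\<in>A. \<delta> powr (2 * real_of_int (w m')) * (cmod (v m'))\<^sup>2)" for v :: "lat \<Rightarrow> complex"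
    have Dpos: "D z > 0" unfolding D_def
      by (rule sum_pos2[OF fin m0(1)]) (use m0 d in auto)
    have rt: "(\<lambda>k. rho A w \<delta> (U k) m) \<longlonglongrightarrow> rho A w \<delta> z m" if "m \<in> A" for m
    proof -
      have "(\<lambda>k. D (U k)) \<longlonglongrightarrow> D z" unfolding D_def
        by (intro tendsto_sum tendsto_mult tendsto_const tendsto_power tendsto_norm) (use Ut in blast)
      moreover have "(\<lambda>k. \<delta> powr (2 * real_of_int (w m)) * (cmod (U k m))\<^sup>2)
          \<longlonglongrightarrow> \<delta> powr (2 * real_of_int (w m)) * (cmod (z m))\<^sup>2"
        by (intro tendsto_mult tendsto_const tendsto_power tendsto_norm) (use Ut that in blast)
      ultimately have "(\<lambda>k. \<delta> powr (2 * real_of_int (w m)) * (cmod (U k m))\<^sup>2 / D (U k))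
          \<longlonglongrightarrow> \<delta> powr (2 * real_of_int (w m)) * (cmod (z m))\<^sup>2 / D z"
        using Dpos by (intro tendsto_divide) auto
      thus ?thesis unfolding rho_def D_def by simp
    qed
    define Sz where "Sz = {m \<in> A. rho A w \<delta> z m > \<delta> powr a}"
    have SzA: "Sz \<subseteq> A" unfolding Sz_def by blast
    have Szne: "Sz \<noteq> {}"
    proof
      assume e: "Sz = {}"
      have "(\<Sum>m\<in>A. rho A w \<delta> z m) = D z / D z"
        unfolding rho_def D_def[symmetric] by (simp add: sum_divide_distrib[symmetric] D_def)
      hence s1: "(\<Sum>m\<in>A. rho A w \<delta> z m) = 1" using Dpos by simp
      have "(\<Sum>m\<in>A. rho A w \<delta> z m) \<le> (\<Sum>m\<in>A. \<delta> powr a)"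
        by (rule sum_mono) (use e in \<open>auto simp: Sz_def not_less\<close>)
      also have "\<dots> = card A * \<delta> powr a" by simp
      also have "\<dots> < card A * \<delta>0 powr a"
        using cA d apos by (intro mult_strict_left_mono powr_less_mono2) auto
      also have "\<dots> = 1" using d0a cA by simp
      finally show False using s1 by simp
    qed
    have "\<forall>m\<in>Sz. eventually (\<lambda>k. rho A w \<delta> (U k) m > \<delta> powr a) sequentially"
    proof
      fix m assume "m \<in> Sz"
      hence "m \<in> A" "rho A w \<delta> z m > \<delta> powr a" unfolding Sz_def by auto
      thus "eventually (\<lambda>k. rho A w \<delta> (U k) m > \<delta> powr a) sequentially"
        by (rule order_tendstoD(1)[OF rt])
    qed
    hence "eventually (\<lambda>k. \<forall>m\<in>Sz. rho A w \<delta> (U k) m > \<delta> powr a) sequentially"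
      by (rule eventually_ball_finite[OF finite_subset[OF SzA fin]])
    then obtain K where "\<forall>n\<ge>K. \<forall>m\<in>Sz. rho A w \<delta> (U n) m > \<delta> powr a"
      unfolding eventually_sequentially by blast
    hence K: "\<forall>m\<in>Sz. rho A w \<delta> (U K) m > \<delta> powr a" by simp
    define t where "t = - ln \<delta>"
    have tpos: "t > 0" using d unfolding t_def by simp
    define y1 where "y1 = ln (cmod (fst (X K)))"
    define y2 where "y2 = ln (cmod (snd (X K)))"
    have near: "\<forall>m\<in>Sz. \<forall>m'\<in>A. t * real_of_int (w m) - y1 * real_of_int (fst m) - y2 * real_of_int (snd m)
                 < t * real_of_int (w m') - y1 * real_of_int (fst m') - y2 * real_of_int (snd m') + t * (\<eta> / (card A + 1))"
    proof (intro ballI)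
      fix m m' assume m: "m \<in> Sz" and m': "m' \<in> A"
      have rK: "rho A w \<delta> (\<lambda>m. mon (X K) m / complex_of_real (mon_norm A (X K))) m > \<delta> powr (2 * \<epsilon>)"
        using K m unfolding U_def a_def by simp
      have mA: "m \<in> A" using m SzA by blast
      note tn = torus_near[OF X(1)[rule_format] fin ne d(1) d(3) mA m' rK]
      from tn[unfolded \<epsilon>_def]
      show "t * real_of_int (w m) - y1 * real_of_int (fst m) - y2 * real_of_int (snd m)
                 < t * real_of_int (w m') - y1 * real_of_int (fst m') - y2 * real_of_int (snd m') + t * (\<eta> / (card A + 1))"
        unfolding t_def y1_def y2_def .
    qed
    obtain \<sigma> where "\<sigma> \<in> Z" "Sz \<subseteq> \<sigma>"
      using comb[OF tri cv sub fin eta etaZ tpos SzA Szne near] by blast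
    hence "Sz \<in> Z" using closed Szne by blast
    thus "{m \<in> A. rho A w \<delta> z m > \<delta> powr a} \<in> Z" unfolding Sz_def .
  qed
  show ?thesis using main apos d0pos unfolding A_def by blast
qed


end
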